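(* For the $3\times3$ absorbing game \[ A=\begin{bmatrix}1^* & 1^* & 2^*\\ 1^* & 2^* & 0\\ 2^* & 0 & 1^*\end{bmatrix}, \] let $(x_\lambda)_{\lambda\in(0,1]}$ be any family of optimal stationary strategies of Player 1 in the $\lambda$-discounted games. Then every accumulation point $x=(x^1,x^2,x^3)$ of $x_\lambda$ as $\lambda\to0$ satisfies $x^i>0$ for $i=1,2,3$. Moreover the limit value satisfies $v\ge 4/3$. *)

theory Defs
  imports "HOL-Analysis.Analysis"
begin

text \<open>The game is given by a payoff
matrix g and a 0/1 matrix p: entry (i,j) is absorbing (starred) iff p i j = 1, in which
case g i j is the absorbing payoff; otherwise g i j is the stage payoff and play stays
in the non-absorbing state.\<close>

definition strat_simplex :: "(real^'n) set" where
  "strat_simplex = {x. (\<forall>i. 0 \<le> x$i) \<and> (\<Sum>i\<in>UNIV. x$i) = 1}"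

text \<open>Normalized lambda-discounted payoff of the stationary pair (x,y), starting in the
non-absorbing state: r = lambda*g(x,y) + (1-lambda)*(expected continuation).\<close>
definition disc_payoff ::
  "real^'m^'n \<Rightarrow> real^'m^'n \<Rightarrow> real \<Rightarrow> real^'n \<Rightarrow> real^'m \<Rightarrow> real" where
  "disc_payoff g p l x y =
     (\<Sum>i\<in>UNIV. \<Sum>j\<in>UNIV. x$i * y$j * (l * (1 - p$i$j) * g$i$j + p$i$j * g$i$j))
   / (\<Sum>i\<in>UNIV. \<Sum>j\<in>UNIV. x$i * y$j * (l * (1 - p$i$j) + p$i$j))"

definition disc_value :: "real^'m^'n \<Rightarrow> real^'m^'n \<Rightarrow> real \<Rightarrow> real" where
  "disc_value g p l = (SUP x\<in>strat_simplex. INF y\<in>strat_simplex. disc_payoff g p l x y)"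

definition optimal_strategy1 ::
  "real^'m^'n \<Rightarrow> real^'m^'n \<Rightarrow> real \<Rightarrow> real^'n \<Rightarrow> bool" where
  "optimal_strategy1 g p l x \<longleftrightarrow>
     x \<in> strat_simplex \<and> (\<forall>y\<in>strat_simplex. disc_payoff g p l x y \<ge> disc_value g p l)"

definition gameA_payoff :: "real^3^3" where
  "gameA_payoff = vector [vector [1,1,2], vector [1,2,0], vector [2,0,1]]"

definition gameA_absorb :: "real^3^3" where
  "gameA_absorb = vector [vector [1,1,1], vector [1,1,0], vector [1,0,1]]"

definition accumulation_point_at0 :: "(real \<Rightarrow> 'a::topological_space) \<Rightarrow> 'a \<Rightarrow> bool" where
  "accumulation_point_at0 f a \<longleftrightarrow>
     (\<exists>s::nat \<Rightarrow> real. (\<forall>n. s n \<in> {0<..1}) \<and> s \<longlonglongrightarrow> 0 \<and> (\<lambda>n. f (s n)) \<longlonglongrightarrow> a)"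

end

theory Submission
  imports Defs
begin

definition Qf :: "real \<Rightarrow> real \<Rightarrow> real^3 \<Rightarrow> real^3 \<Rightarrow> real" where
 "Qf w l x y = x$1*y$1*(1-w) + x$1*y$2*(1-w) + x$1*y$3*(2-w)
   + x$2*y$1*(1-w) + x$2*y$2*(2-w) + x$2*y$3*(-l*w)
   + x$3*y$1*(2-w) + x$3*y$2*(-l*w) + x$3*y$3*(1-w)"

definition Df :: "real \<Rightarrow> real^3 \<Rightarrow> real^3 \<Rightarrow> real" where
 "Df l x y = x$1*y$1 + x$1*y$2 + x$1*y$3 + x$2*y$1 + x$2*y$2 + l*(x$2*y$3)
   + x$3*y$1 + l*(x$3*y$2) + x$3*y$3"

definition Nf :: "real \<Rightarrow> real^3 \<Rightarrow> real^3 \<Rightarrow> real" where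
 "Nf l x y = x$1*y$1 + x$1*y$2 + 2*(x$1*y$3) + x$2*y$1 + 2*(x$2*y$2)
   + 2*(x$3*y$1) + x$3*y$3"

lemma simplex3: "(x::real^3) \<in> strat_simplex \<longleftrightarrow> (0 \<le> x$1 \<and> 0 \<le> x$2 \<and> 0 \<le> x$3 \<and> x$1 + x$2 + x$3 = (1::real))"
  by (simp add: strat_simplex_def forall_3 sum_3)

lemma payoff_eq: "disc_payoff gameA_payoff gameA_absorb l x y = Nf l x y / Df l x y"
  unfolding disc_payoff_def Nf_def Df_def gameA_payoff_def gameA_absorb_def
  by (simp add: sum_3 algebra_simps)

lemma Df_pos:
  assumes "0 < l" "l \<le> 1" "x \<in> strat_simplex" "y \<in> strat_simplex"
  shows "Df l x y \<ge> l"
proof -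
  have e: "Df l x y - l * ((x$1+x$2+x$3)*(y$1+y$2+y$3)) = (1-l)*(x$1*y$1 + x$1*y$2 + x$1*y$3 + x$2*y$1 + x$2*y$2 + x$3*y$1 + x$3*y$3)"
    unfolding Df_def by (simp add: algebra_simps)
  have "0 \<le> (1-l)*(x$1*y$1 + x$1*y$2 + x$1*y$3 + x$2*y$1 + x$2*y$2 + x$3*y$1 + x$3*y$3)"
    using assms unfolding simplex3 by (intro mult_nonneg_nonneg add_nonneg_nonneg) auto
  hence "Df l x y \<ge> l * ((x$1+x$2+x$3)*(y$1+y$2+y$3))" using e by linarith
  thus ?thesis using assms unfolding simplex3 by simp
qed

lemma NQ: "Nf l x y - w * Df l x y = Qf w l x y"
  unfolding Nf_def Df_def Qf_def by (simp add: algebra_simps)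


lemma ge_iff:
  assumes "0 < l" "l \<le> 1" "x \<in> strat_simplex" "y \<in> strat_simplex"
  shows "w \<le> disc_payoff gameA_payoff gameA_absorb l x y \<longleftrightarrow> 0 \<le> Qf w l x y"
proof -
  have D: "Df l x y > 0" using Df_pos[OF assms] assms by linarith
  show ?thesis unfolding payoff_eq using D NQ[of l x y w] by (simp add: le_divide_eq, linarith)
qed

lemma le_iff:
  assumes "0 < l" "l \<le> 1" "x \<in> strat_simplex" "y \<in> strat_simplex"
  shows "disc_payoff gameA_payoff gameA_absorb l x y \<le> w \<longleftrightarrow> Qf w l x y \<le> 0"
proof -
  have D: "Df l x y > 0" using Df_pos[OF assms] assms by linarith
  show ?thesis unfolding payoff_eq using D NQ[of l x y w] by (simp add: divide_le_eq, linarith)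
qed

definition c1 :: "real \<Rightarrow> real \<Rightarrow> real^3 \<Rightarrow> real" where
  "c1 w l x = (1-w)*x$1 + (1-w)*x$2 + (2-w)*x$3"
definition c2 :: "real \<Rightarrow> real \<Rightarrow> real^3 \<Rightarrow> real" where
  "c2 w l x = (1-w)*x$1 + (2-w)*x$2 - l*w*x$3"
definition c3 :: "real \<Rightarrow> real \<Rightarrow> real^3 \<Rightarrow> real" where
  "c3 w l x = (2-w)*x$1 - l*w*x$2 + (1-w)*x$3"

lemma Q_cols: "Qf w l x y = y$1 * c1 w l x + y$2 * c2 w l x + y$3 * c3 w l x"
  unfolding Qf_def c1_def c2_def c3_def by (simp add: algebra_simps)

lemma Q_rows: "Qf w l x y = x$1 * c1 w l y + x$2 * c2 w l y + x$3 * c3 w l y"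
  unfolding Qf_def c1_def c2_def c3_def by (simp add: algebra_simps)

lemma payoff_nonneg:
  assumes "0 < l" "l \<le> 1" "x \<in> strat_simplex" "y \<in> strat_simplex"
  shows "0 \<le> disc_payoff gameA_payoff gameA_absorb l x y"
  unfolding ge_iff[OF assms] using assms unfolding Qf_def simplex3
  by (simp add: mult_nonneg_nonneg)

lemma payoff_le2:
  assumes "0 < l" "l \<le> 1" "x \<in> strat_simplex" "y \<in> strat_simplex"
  shows "disc_payoff gameA_payoff gameA_absorb l x y \<le> 2"
proof -
  have "Qf 2 l x y = -(x$1*y$1 + x$1*y$2 + x$2*y$1 + x$3*y$3 + 2*l*(x$2*y$3) + 2*l*(x$3*y$2))"
    unfolding Qf_def by (simp add: algebra_simps)
  also have "\<dots> \<le> 0" using assms unfolding simplex3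
    by (intro neg_le_0_iff_le[THEN iffD2] add_nonneg_nonneg mult_nonneg_nonneg) auto
  finally show ?thesis using le_iff[OF assms] by simp
qed

lemma t_exists: "\<exists>t::real. t^2 = (1-t)^3 \<and> 1/3 < t \<and> t < 1/2"
proof -
  have "\<exists>t. 1/3 \<le> t \<and> t \<le> 1/2 \<and> (\<lambda>t::real. t^2 - (1-t)^3) t = 0"
    by (rule IVT') (auto intro!: continuous_intros simp: power2_eq_square power3_eq_cube)
  then obtain t::real where t: "1/3 \<le> t" "t \<le> 1/2" "t^2 - (1-t)^3 = 0" by auto
  have "t \<noteq> 1/3" proof assume "t = 1/3" with t(3) show False by (simp add: power_divide eval_nat_numeral) qed
  moreover have "t \<noteq> 1/2" proof assume "t = 1/2" with t(3) show False by (simp add: power_divide eval_nat_numeral) qed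
  ultimately show ?thesis using t by auto
qed


lemma x0_simplex:
  assumes "0 < t" "t < 1"
  shows "(vector [(1-t)^2, t*(1-t), t] :: real^3) \<in> strat_simplex"
proof -
  have "(1-t)^2 + t*(1-t) + t = 1" by (simp add: power2_eq_square algebra_simps)
  thus ?thesis unfolding simplex3 using assms by simp
qed

lemma lower_bound:
  assumes t: "t^2 = (1-t)^3" "1/3 < t" "t < 1/2"
    and l: "0 < l" "l \<le> 1" and y: "y \<in> strat_simplex"
  shows "1 + t - 2*l \<le> disc_payoff gameA_payoff gameA_absorb l (vector [(1-t)^2, t*(1-t), t]) y"
proof -
  define x0 :: "real^3" where "x0 = vector [(1-t)^2, t*(1-t), t]"
  define w where "w = 1 + t - 2*l"
  have xs: "x0 \<in> strat_simplex" unfolding x0_def using x0_simplex t by simp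
  have e1: "c1 w l x0 = 2*l" unfolding c1_def x0_def w_def
    by (simp add: power2_eq_square algebra_simps)
  have e2: "c2 w l x0 = l*(2 - 3*t - t^2 + 2*l*t)" unfolding c2_def x0_def w_def
    by (simp add: power2_eq_square algebra_simps)
  have e3: "c3 w l x0 = ((1-t)^3 - t^2) + l*(2*(1-t)^2 + t + t^3 + 2*l*t*(1-t))"
    unfolding c3_def x0_def w_def
    by (simp add: power2_eq_square power3_eq_cube algebra_simps)
  have "t^2 \<le> (1/2)^2" using t by (intro power_mono) auto
  hence "0 \<le> 2 - 3*t - t^2 + 2*l*t" using t l by (simp add: power2_eq_square) 
  hence n2: "0 \<le> c2 w l x0" using e2 l by simp
  have n3: "0 \<le> c3 w l x0" using e3 t l by (simp add: mult_nonneg_nonneg add_nonneg_nonneg)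
  have n1: "0 \<le> c1 w l x0" using e1 l by simp
  have "0 \<le> Qf w l x0 y" unfolding Q_cols using y n1 n2 n3 unfolding simplex3
    by (intro add_nonneg_nonneg mult_nonneg_nonneg) auto
  thus ?thesis using ge_iff[OF l xs y] unfolding w_def x0_def by simp
qed

lemma upper_bound:
  assumes t: "t^2 = (1-t)^3" "1/3 < t" "t < 1/2"
    and l: "0 < l" "l \<le> 1" and x: "x \<in> strat_simplex"
  shows "disc_payoff gameA_payoff gameA_absorb l x (vector [(1-t)^2, t*(1-t), t]) \<le> 1 + t"
proof -
  define y0 :: "real^3" where "y0 = vector [(1-t)^2, t*(1-t), t]"
  have ys: "y0 \<in> strat_simplex" unfolding y0_def using x0_simplex t by simp
  have e1: "c1 (1+t) l y0 = 0" unfolding c1_def y0_def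
    by (simp add: power2_eq_square algebra_simps)
  have e2: "c2 (1+t) l y0 = -(l*(1+t)*t)" unfolding c2_def y0_def
    by (simp add: power2_eq_square algebra_simps)
  have e3: "c3 (1+t) l y0 = ((1-t)^3 - t^2) - l*(1+t)*t*(1-t)"
    unfolding c3_def y0_def
    by (simp add: power2_eq_square power3_eq_cube algebra_simps)
  have n2: "c2 (1+t) l y0 \<le> 0" using e2 t l by simp
  have n3: "c3 (1+t) l y0 \<le> 0" using e3 t l by simp
  have "x$2 * c2 (1+t) l y0 \<le> 0" "x$3 * c3 (1+t) l y0 \<le> 0"
    using x n2 n3 unfolding simplex3 by (auto simp: mult_nonneg_nonpos)
  hence "Qf (1+t) l x y0 \<le> 0" unfolding Q_rows e1 by simp
  thus ?thesis using le_iff[OF l x ys] unfolding y0_def by simp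
qed

lemma simplex_ne: "(vector [1,0,0] :: real^3) \<in> strat_simplex"
  unfolding simplex3 by simp

lemma value_bounds:
  assumes t: "t^2 = (1-t)^3" "1/3 < t" "t < 1/2"
    and l: "0 < l" "l \<le> 1"
  shows "1 + t - 2*l \<le> disc_value gameA_payoff gameA_absorb l"
        "disc_value gameA_payoff gameA_absorb l \<le> 1 + t"
proof -
  define x0 :: "real^3" where "x0 = vector [(1-t)^2, t*(1-t), t]"
  have xs: "x0 \<in> strat_simplex" unfolding x0_def using x0_simplex t by simp
  let ?P = "disc_payoff gameA_payoff gameA_absorb l"
  have ne: "(strat_simplex :: (real^3) set) \<noteq> {}" using simplex_ne by auto
  have bb: "bdd_below (?P x ` strat_simplex)" if "x \<in> strat_simplex" for x
    using payoff_nonneg[OF l that] by (auto intro!: bdd_belowI2[where m=0])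
  have infle: "(INF y\<in>strat_simplex. ?P x y) \<le> 1 + t" if "x \<in> strat_simplex" for x
    by (rule cINF_lower2[OF bb[OF that] xs]) (use upper_bound[OF t l that] x0_def in simp)
  show "disc_value gameA_payoff gameA_absorb l \<le> 1 + t"
    unfolding disc_value_def by (rule cSUP_least[OF ne]) (use infle in auto)
  have ba: "bdd_above ((\<lambda>x. INF y\<in>strat_simplex. ?P x y) ` strat_simplex)"
    using infle by (auto intro!: bdd_aboveI2[where M="1+t"])
  have "1 + t - 2*l \<le> (INF y\<in>strat_simplex. ?P x0 y)"
    by (rule cINF_greatest[OF ne]) (use lower_bound[OF t l] x0_def in simp)
  also have "\<dots> \<le> disc_value gameA_payoff gameA_absorb l"
    unfolding disc_value_def by (rule cSUP_upper[OF xs ba])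
  finally show "1 + t - 2*l \<le> disc_value gameA_payoff gameA_absorb l" .
qed


lemma lim_nonneg: "(f \<longlongrightarrow> (a::real)) sequentially \<Longrightarrow> (\<forall>n. 0 \<le> f n) \<Longrightarrow> 0 \<le> a"
  by (rule tendsto_lowerbound) (auto intro: always_eventually)

theorem mainTheorem4:
  fixes xs :: "real \<Rightarrow> real^3"
  assumes "\<forall>l\<in>{0<..1}. optimal_strategy1 gameA_payoff gameA_absorb l (xs l)"
  shows "(\<forall>x. accumulation_point_at0 xs x \<longrightarrow> (\<forall>i. x$i > 0))
         \<and> (\<exists>v. (disc_value gameA_payoff gameA_absorb \<longlongrightarrow> v) (at_right 0) \<and> v \<ge> 4/3)"
proof -
  obtain t :: real where t: "t^2 = (1-t)^3" "1/3 < t" "t < 1/2" using t_exists by blast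
  have part2: "(disc_value gameA_payoff gameA_absorb \<longlongrightarrow> 1 + t) (at_right 0)"
  proof (rule tendsto_sandwich)
    have ev: "eventually (\<lambda>l::real. 0 < l \<and> l \<le> 1) (at_right 0)"
      unfolding eventually_at_right_field by (intro exI[of _ 1]) auto
    show "eventually (\<lambda>l. 1 + t - 2*l \<le> disc_value gameA_payoff gameA_absorb l) (at_right 0)"
      using ev by eventually_elim (use value_bounds[OF t] in auto)
    show "eventually (\<lambda>l. disc_value gameA_payoff gameA_absorb l \<le> 1 + t) (at_right 0)"
      using ev by eventually_elim (use value_bounds[OF t] in auto)
    have "((\<lambda>l::real. 1 + t - 2*l) \<longlongrightarrow> 1 + t - 2*0) (at_right 0)"
      by (intro tendsto_intros)
    thus "((\<lambda>l::real. 1 + t - 2*l) \<longlongrightarrow> 1 + t) (at_right 0)" by simp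
  qed simp
  have part1: "\<forall>i. x$i > 0" if acc: "accumulation_point_at0 xs x" for x
  proof -
    obtain rs where rs: "\<And>n. rs n \<in> {0<..1}" "rs \<longlonglongrightarrow> 0" "(\<lambda>n. xs (rs n)) \<longlonglongrightarrow> x"
      using acc unfolding accumulation_point_at0_def by blast
    have comp: "(\<lambda>n. xs (rs n) $ i) \<longlonglongrightarrow> x $ i" for i
      by (rule tendsto_vec_nth[OF rs(3)])
    have simp_n: "xs (rs n) \<in> strat_simplex" for n
      using assms rs(1) unfolding optimal_strategy1_def by blast
    have cols: "0 \<le> c1 (1+t-2*rs n) (rs n) (xs (rs n))"
               "0 \<le> c2 (1+t-2*rs n) (rs n) (xs (rs n))"
               "0 \<le> c3 (1+t-2*rs n) (rs n) (xs (rs n))" for n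
    proof -
      have l: "0 < rs n" "rs n \<le> 1" using rs(1)[of n] by auto
      have ge: "1+t-2*rs n \<le> disc_payoff gameA_payoff gameA_absorb (rs n) (xs (rs n)) y"
        if "y \<in> strat_simplex" for y
        using value_bounds(1)[OF t l] assms rs(1)[of n] that
        unfolding optimal_strategy1_def by force
      have e1: "(vector [1,0,0] :: real^3) \<in> strat_simplex" unfolding simplex3 by simp
      have e2: "(vector [0,1,0] :: real^3) \<in> strat_simplex" unfolding simplex3 by simp
      have e3: "(vector [0,0,1] :: real^3) \<in> strat_simplex" unfolding simplex3 by simp
      show "0 \<le> c1 (1+t-2*rs n) (rs n) (xs (rs n))"
        using ge[OF e1] ge_iff[OF l simp_n e1] unfolding Q_cols by simp
      show "0 \<le> c2 (1+t-2*rs n) (rs n) (xs (rs n))"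
        using ge[OF e2] ge_iff[OF l simp_n e2] unfolding Q_cols by simp
      show "0 \<le> c3 (1+t-2*rs n) (rs n) (xs (rs n))"
        using ge[OF e3] ge_iff[OF l simp_n e3] unfolding Q_cols by simp
    qed
    have L1: "(\<lambda>n. c1 (1+t-2*rs n) (rs n) (xs (rs n))) \<longlonglongrightarrow> c1 (1+t-2*0) 0 x"
      unfolding c1_def by (intro tendsto_intros comp rs(2))
    have L2: "(\<lambda>n. c2 (1+t-2*rs n) (rs n) (xs (rs n))) \<longlonglongrightarrow> c2 (1+t-2*0) 0 x"
      unfolding c2_def by (intro tendsto_intros comp rs(2))
    have L3: "(\<lambda>n. c3 (1+t-2*rs n) (rs n) (xs (rs n))) \<longlonglongrightarrow> c3 (1+t-2*0) 0 x"
      unfolding c3_def by (intro tendsto_intros comp rs(2))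
    have C1: "0 \<le> -t*(x$1 + x$2) + (1-t)*x$3"
      using lim_nonneg[OF L1] cols(1) unfolding c1_def by (simp add: algebra_simps)
    have C2: "0 \<le> -t*x$1 + (1-t)*x$2"
      using lim_nonneg[OF L2] cols(2) unfolding c2_def by (simp add: algebra_simps)
    have C3: "0 \<le> (1-t)*x$1 - t*x$3"
      using lim_nonneg[OF L3] cols(3) unfolding c3_def by (simp add: algebra_simps)
    have nn: "0 \<le> x$i" for i
      using lim_nonneg[OF comp[of i]] simp_n unfolding strat_simplex_def by auto
    have "(\<lambda>n. xs (rs n) $ 1 + xs (rs n) $ 2 + xs (rs n) $ 3) \<longlonglongrightarrow> x$1 + x$2 + x$3"
      by (intro tendsto_intros comp)
    moreover have "(\<lambda>n. xs (rs n) $ 1 + xs (rs n) $ 2 + xs (rs n) $ 3) = (\<lambda>n. 1)"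
      using simp_n unfolding simplex3 by auto
    ultimately have sum1: "x$1 + x$2 + x$3 = 1"
      using LIMSEQ_unique tendsto_const by metis
    have x3: "x$3 > 0"
    proof (rule ccontr)
      assume "\<not> x$3 > 0"
      hence "x$3 = 0" using nn[of 3] by simp
      hence "x$1 + x$2 = 1" using sum1 by simp
      thus False using C1 \<open>x$3 = 0\<close> t by simp
    qed
    have x1: "x$1 > 0"
    proof (rule ccontr)
      assume "\<not> x$1 > 0"
      hence "x$1 = 0" using nn[of 1] by simp
      moreover have "t * x$3 > 0" using x3 t by simp
      ultimately show False using C3 by simp
    qed
    have x2: "x$2 > 0"
    proof (rule ccontr)
      assume "\<not> x$2 > 0"
      hence "x$2 = 0" using nn[of 2] by simp
      moreover have "t * x$1 > 0" using x1 t by simp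
      ultimately show False using C2 by simp
    qed
    show ?thesis using x1 x2 x3 unfolding forall_3 by simp
  qed
  show ?thesis using part1 part2 t by auto
qed

end
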